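(* Let $c_1\in(0,0.01)$ be a sufficiently small absolute constant and $c_0$ a sufficiently large absolute constant, let $n$ be sufficiently large and $\epsilon\in[c_0/\sqrt n,1)$. Then every function in the support of $\mathcal D_{\mathrm{yes}}$ is $(0.1c_1\epsilon)$-close to some monotone function $g:\{0,1\}^n\to\{0,1\}$, i.e. $\Pr_{x}[f(x)\ne g(x)]\le 0.1c_1\epsilon$.
   Context: Parameters: $a=\sqrt n/\epsilon$ and $m=n-a$ (assumed integers), $L=0.1\cdot 2^{\sqrt m/\epsilon}$. For $x\in\{0,1\}^n$ and $B\subseteq[n]$, $x_B\in\{0,1\}^B$ is the restriction of $x$ to $B$; $|z|$ is Hamming weight. For a set $A$ of size $a$, define on $\{0,1\}^A$: $h^{(+,0)}\equiv 0$; $h^{(+,1)}(z)=1$ if $|z|>a/2+c_1\sqrt a$ or $|z|<a/2-c_1\sqrt a$, and $0$ otherwise; $h^{(-,0)}(z)=1$ iff $|z|>a/2+c_1\sqrt a$; $h^{(-,1)}(z)=1$ iff $|z|<a/2-c_1\sqrt a$. $\mathsf{Talagrand}(m,\epsilon)$ on a coordinate set $C$ of size $m$: draw $L$ independent sets $\mathbf T_1,\dots,\mathbf T_L\subseteq C$, each formed by $\sqrt m/\epsilon$ independent uniform draws from $C$ with replacement; for $y\in\{0,1\}^C$, $S_T(y)=\{\ell: y_j=1\ \forall j\in T_\ell\}$. A draw $\mathbf f_{\mathrm{yes}}\sim\mathcal D_{\mathrm{yes}}$: choose $\mathbf A\subseteq[n]$ uniformly among sets of size $a$, put $\mathbf C=[n]\setminus\mathbf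 A$, draw $\mathbf T\sim\mathsf{Talagrand}(m,\epsilon)$ on $\mathbf C$, and uniform $\mathbf b\in\{0,1\}^L$; then $\mathbf f_{\mathrm{yes}}(x)=1$ if $|S_{\mathbf T}(x_{\mathbf C})|>1$ or $|x_{\mathbf C}|>m/2+0.05\epsilon\sqrt m$; otherwise $\mathbf f_{\mathrm{yes}}(x)=0$ if $|S_{\mathbf T}(x_{\mathbf C})|=0$ or $|x_{\mathbf C}|<m/2$; otherwise $S_{\mathbf T}(x_{\mathbf C})=\{\ell\}$ and $|x_{\mathbf C}|\in[m/2,m/2+0.05\epsilon\sqrt m]$, and $\mathbf f_{\mathrm{yes}}(x)=h^{(+,\mathbf b_\ell)}(x_{\mathbf A})$. A function is monotone if $f(x)\le f(y)$ whenever $x\le y$ coordinatewise. *)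

theory Defs
  imports Complex_Main
begin

text \<open>Points x of {0,1}^n are encoded as the set of coordinates equal to 1,
  i.e. subsets of {..<n}. The restriction x_B is x \<inter> B, and the Hamming
  weight |x_B| is card (x \<inter> B).\<close>

definition cube :: "nat \<Rightarrow> nat set set" where
  "cube n = Pow {..<n}"

definition monotone_on_cube :: "nat \<Rightarrow> (nat set \<Rightarrow> bool) \<Rightarrow> bool" where
  "monotone_on_cube n g \<longleftrightarrow> (\<forall>x y. x \<subseteq> y \<and> y \<subseteq> {..<n} \<and> g x \<longrightarrow> g y)"

definition dist_cube :: "nat \<Rightarrow> (nat set \<Rightarrow> bool) \<Rightarrow> (nat set \<Rightarrow> bool) \<Rightarrow> real" where
  "dist_cube n f g = real (card {x \<in> cube n. f x \<noteq> g x}) / 2 ^ n"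

text \<open>The functions h on {0,1}^A (z = x_A, a = |A|).\<close>
definition h_plus :: "real \<Rightarrow> nat \<Rightarrow> bool \<Rightarrow> nat set \<Rightarrow> bool" where
  "h_plus c1 a b z = (if b then
      (real (card z) > real a / 2 + c1 * sqrt (real a) \<or>
       real (card z) < real a / 2 - c1 * sqrt (real a))
    else False)"

definition h_minus :: "real \<Rightarrow> nat \<Rightarrow> bool \<Rightarrow> nat set \<Rightarrow> bool" where
  "h_minus c1 a b z = (if b then real (card z) < real a / 2 - c1 * sqrt (real a)
    else real (card z) > real a / 2 + c1 * sqrt (real a))"

text \<open>Number of draws per Talagrand term and number of terms (rounded down).\<close>
definition tal_k :: "nat \<Rightarrow> real \<Rightarrow> nat" where
  "tal_k m eps = nat \<lfloor>sqrt (real m) / eps\<rfloor>"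

definition tal_L :: "nat \<Rightarrow> real \<Rightarrow> nat" where
  "tal_L m eps = nat \<lfloor>0.1 * 2 powr (sqrt (real m) / eps)\<rfloor>"

definition S_T :: "nat \<Rightarrow> (nat \<Rightarrow> nat set) \<Rightarrow> nat set \<Rightarrow> nat set" where
  "S_T L T y = {l \<in> {..<L}. T l \<subseteq> y}"

definition f_yes :: "nat \<Rightarrow> real \<Rightarrow> real \<Rightarrow> nat set \<Rightarrow> (nat \<Rightarrow> nat set) \<Rightarrow> (nat \<Rightarrow> bool)
    \<Rightarrow> nat set \<Rightarrow> bool" where
  "f_yes n eps c1 A T b x =
    (let C = {..<n} - A; m = card C; a = card A; L = tal_L m eps;
         S = S_T L T (x \<inter> C); w = real (card (x \<inter> C)) in
     if card S > 1 \<or> w > real m / 2 + 0.05 * eps * sqrt (real m) then True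
     else if card S = 0 \<or> w < real m / 2 then False
     else h_plus c1 a (b (THE l. S = {l})) (x \<inter> A))"

definition yes_support :: "nat \<Rightarrow> real \<Rightarrow> real \<Rightarrow> (nat set \<Rightarrow> bool) set" where
  "yes_support n eps c1 =
    {f. \<exists>A T b. A \<subseteq> {..<n} \<and> real (card A) = sqrt (real n) / eps \<and>
        (\<forall>l < tal_L (n - card A) eps. \<exists>s :: nat \<Rightarrow> nat.
            (\<forall>i < tal_k (n - card A) eps. s i \<in> {..<n} - A) \<and>
            T l = s ` {..<tal_k (n - card A) eps}) \<and>
        f = f_yes n eps c1 A T b}"

end

theory Submission
  imports Defs
begin

lemma cb_rec: "Suc k * ((2*k+2) choose (k+1)) = 2*(2*k+1) * ((2*k) choose k)"
proof -
  have 1: "Suc k * (Suc (2*k+1) choose Suc k) = Suc (2*k+1) * ((2*k+1) choose k)"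
    by (rule Suc_times_binomial)
  have 2: "Suc (2*k) * ((2*k) choose k) = (Suc (2*k) choose Suc k) * Suc k"
    by (rule Suc_times_binomial_eq)
  have 3: "(Suc (2*k) choose Suc k) = (2*k+1) choose k"
    using central_binomial_odd[of "2*k+1"] by simp
  have "Suc k * (Suc k * ((2*k+2) choose (k+1))) = Suc k * (2*(2*k+1) * ((2*k) choose k))"
  proof -
    have "Suc k * (Suc k * ((2*k+2) choose (k+1))) = Suc k * (Suc (2*k+1) * ((2*k+1) choose k))"
    proof -
      have e: "(2*k+2) choose (k+1) = Suc (2*k+1) choose Suc k"
        by (metis Suc_eq_plus1 add_Suc_right one_add_one)
      show ?thesis using 1 unfolding e by (simp only:)
    qed
    also have "\<dots> = Suc (2*k+1) * (((2*k+1) choose k) * Suc k)" by (simp only: mult_ac)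
    also have "\<dots> = Suc (2*k+1) * (Suc (2*k) * ((2*k) choose k))" proof -
      have "((2*k+1) choose k) * Suc k = Suc (2*k) * ((2*k) choose k)" using 2 3 by (metis Suc_eq_plus1)
      then show ?thesis by (simp only:)
    qed
    also have "\<dots> = Suc k * (2*(2*k+1) * ((2*k) choose k))" proof -
      have "\<And>c::nat. Suc (2*k+1) * (Suc (2*k) * c) = Suc k * (2*(2*k+1) * c)" by (simp add: algebra_simps)
      then show ?thesis .
    qed
    finally show ?thesis .
  qed
  then show ?thesis by (metis Zero_not_Suc mult_left_cancel)
qed

lemma cb_bound: "((2*k) choose k)^2 * (3*k+1) \<le> 16^k"
proof (induction k)
  case 0 then show ?case by simp
next
  case (Suc k)
  define c where "c = (2*k) choose k"
  define c' where "c' = (2*k+2) choose (k+1)"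
  have r: "Suc k * c' = 2*(2*k+1)*c" using cb_rec unfolding c_def c'_def by simp
  have IH: "c^2*(3*k+1) \<le> 16^k" using Suc.IH c_def by simp
  have "(Suc k)^2 * (c'^2 * (3*k+4)) = 4*(2*k+1)^2*c^2*(3*k+4)"
  proof -
    have "(Suc k)^2 * (c'^2 * (3*k+4)) = (Suc k * c')^2 * (3*k+4)" by (simp only: power_mult_distrib mult_ac)
    also have "\<dots> = (2*(2*k+1)*c)^2 * (3*k+4)" using r by simp
    also have "\<dots> = 4*(2*k+1)^2*c^2*(3*k+4)" by (simp only: power_mult_distrib mult_ac) simp
    finally show ?thesis .
  qed
  also have "\<dots> \<le> 16*(k+1)^2*(c^2*(3*k+1))"
  proof -
    have "4*(2*k+1)^2*(3*k+4) \<le> 16*(k+1)^2*(3*k+1)"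
      by (simp add: power2_eq_square algebra_simps)
    then have "4*(2*k+1)^2*(3*k+4) * c^2 \<le> 16*(k+1)^2*(3*k+1) * c^2" by simp
    then show ?thesis by (simp add: algebra_simps)
  qed
  also have "\<dots> \<le> 16*(k+1)^2*16^k" using IH by simp
  finally have "(Suc k)^2 * (c'^2 * (3*k+4)) \<le> (Suc k)^2 * 16^Suc k" by simp
  then have "c'^2 * (3*k+4) \<le> 16^Suc k" by (simp del: power_Suc)
  then show ?case unfolding c'_def by (simp add: algebra_simps)
qed

lemma cb_nat: "(a choose (a div 2))^2 * (3*a+2) \<le> 2*4^a"
proof (cases "even a")
  case True
  then obtain k where a: "a = 2*k" by blast
  have "((2*k) choose k)^2 * (3*k+1) \<le> 16^k" by (rule cb_bound)
  then have "2*(((2*k) choose k)^2 * (3*k+1)) \<le> 2*16^k" by simp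
  moreover have "(4::nat)^(2*k) = 16^k" by (simp add: power_mult)
  ultimately show ?thesis using a by (simp add: algebra_simps)
next
  case False
  then obtain k where a: "a = 2*k+1" using oddE by blast
  have dv: "a div 2 = k" using a by simp
  have p: "(2*k+2) choose (k+1) = 2 * ((2*k+1) choose k)"
  proof -
    have "(2*k+2) choose (k+1) = Suc (2*k+1) choose Suc k"
      by (metis Suc_eq_plus1 add_Suc_right one_add_one)
    also have "\<dots> = ((2*k+1) choose k) + ((2*k+1) choose Suc k)" by (rule binomial_Suc_Suc)
    also have "(2*k+1) choose Suc k = (2*k+1) choose k"
      using central_binomial_odd[of "2*k+1"] by simp
    finally show ?thesis by simp
  qed
  have cb1: "((2*(k+1)) choose (k+1))^2 * (3*(k+1)+1) \<le> 16^(k+1)" by (rule cb_bound)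
  have p': "(2*(k+1)) choose (k+1) = 2 * ((2*k+1) choose k)" using p by (simp only: distrib_left mult_1_right)
  have gen: "\<And>X Y::nat. Y = 2*X \<Longrightarrow> Y^2*(3*(k+1)+1) \<le> 16^(k+1) \<Longrightarrow> X^2*(3*k+4) \<le> 4*16^k"
  proof -
    fix X Y :: nat assume "Y = 2*X" "Y^2*(3*(k+1)+1) \<le> 16^(k+1)"
    then have "4*(X^2*(3*k+4)) \<le> 4*(4*16^k)" by (simp add: power_mult_distrib algebra_simps)
    then show "X^2*(3*k+4) \<le> 4*16^k" by linarith
  qed
  have h: "((2*k+1) choose k)^2 * (3*k+4) \<le> 4*16^k" by (rule gen[OF p' cb1])
  have "((2*k+1) choose k)^2 * (6*k+5) \<le> ((2*k+1) choose k)^2 * (2*(3*k+4))"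
    by (intro mult_left_mono) auto
  also have "\<dots> = 2*(((2*k+1) choose k)^2 * (3*k+4))" by (simp only: mult_ac)
  also have "\<dots> \<le> 2*(4*16^k)" using h by (rule mult_le_mono2)
  also have "\<dots> = 2*4^(2*k+1)" by (simp add: power_mult)
  finally show ?thesis using a dv by (simp add: algebra_simps)
qed

lemma cb_real:
  assumes "a > 0"
  shows "real (a choose j) \<le> (41/50) * 2^a / sqrt (real a)"
proof -
  have mx: "a choose j \<le> a choose (a div 2)" by (rule binomial_maximum)
  have "(a choose j)^2 * (3*a+2) \<le> 2*4^a"
    using cb_nat[of a] mx by (meson le_trans mult_le_mono1 power_mono zero_le)
  then have "real ((a choose j)^2 * (3*a+2)) \<le> real (2*4^a)" by linarith
  then have h: "real (a choose j)^2 * (3*real a+2) \<le> 2*4^a" by (simp add: algebra_simps)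
  define c where "c = real (a choose j)"
  have c0: "c \<ge> 0" unfolding c_def by simp
  have "(c * sqrt (real a))^2 = c^2 * real a" by (simp add: power_mult_distrib)
  also have "\<dots> \<le> (2/3)*4^a"
  proof -
    have "c^2 * (3*real a) \<le> c^2*(3*real a+2)" by (intro mult_left_mono) auto
    with h have "c^2*(3*real a) \<le> 2*4^a" unfolding c_def by linarith
    then show ?thesis by (simp add: algebra_simps)
  qed
  also have "\<dots> \<le> ((41/50) * 2^a)^2"
  proof -
    have e: "(2::real)^a*2^a = 4^a" by (simp add: power_mult_distrib[symmetric])
    have "((41/50) * (2::real)^a)^2 = (1681/2500)*(2^a*2^a)" by (simp add: power2_eq_square)
    then have "((41/50) * (2::real)^a)^2 = (1681/2500)*4^a" by (simp only: e)
    moreover have "(0::real) \<le> 4^a" by simp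
    ultimately show ?thesis using e by linarith
  qed
  finally have "c * sqrt (real a) \<le> (41/50) * 2^a"
    by (rule power2_le_imp_le) simp
  then show ?thesis unfolding c_def using assms by (simp add: field_simps)
qed

lemma card_subsets_pred:
  assumes "finite A"
  shows "card {u. u \<subseteq> A \<and> P (card u)} = (\<Sum>j\<in>{j. j \<le> card A \<and> P j}. card A choose j)"
proof -
  let ?J = "{j. j \<le> card A \<and> P j}"
  have eq: "{u. u \<subseteq> A \<and> P (card u)} = (\<Union>j\<in>?J. {u. u \<subseteq> A \<and> card u = j})"
    using assms by (auto intro: card_mono)
  have "card (\<Union>j\<in>?J. {u. u \<subseteq> A \<and> card u = j}) = (\<Sum>j\<in>?J. card {u. u \<subseteq> A \<and> card u = j})"
    by (rule card_UN_disjoint) (use assms in auto)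
  also have "\<dots> = (\<Sum>j\<in>?J. card A choose j)"
    by (rule sum.cong) (simp_all add: n_subsets assms)
  finally show ?thesis using eq by simp
qed

lemma card_split:
  assumes "A \<subseteq> {..<n}"
  shows "card {x. x \<subseteq> {..<n} \<and> P (x \<inter> A) \<and> Q (x \<inter> ({..<n} - A))}
       = card {u. u \<subseteq> A \<and> P u} * card {v. v \<subseteq> {..<n} - A \<and> Q v}"
proof -
  let ?C = "{..<n} - A"
  let ?U = "{u. u \<subseteq> A \<and> P u}" and ?V = "{v. v \<subseteq> ?C \<and> Q v}"
  let ?h = "\<lambda>(u, v). u \<union> v"
  have inj: "inj_on ?h (?U \<times> ?V)"
  proof (rule inj_onI, clarsimp)
    fix u v u' v'
    assume "u \<subseteq> A" "v \<subseteq> ?C" "u' \<subseteq> A" "v' \<subseteq> ?C" "u \<union> v = u' \<union> v'"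
    then have "u = (u \<union> v) \<inter> A" "u' = (u' \<union> v') \<inter> A" "v = (u \<union> v) \<inter> ?C" "v' = (u' \<union> v') \<inter> ?C"
      by auto
    then show "u = u' \<and> v = v'" using \<open>u \<union> v = u' \<union> v'\<close> by metis
  qed
  have img: "?h ` (?U \<times> ?V) = {x. x \<subseteq> {..<n} \<and> P (x \<inter> A) \<and> Q (x \<inter> ?C)}"
  proof
    show "?h ` (?U \<times> ?V) \<subseteq> {x. x \<subseteq> {..<n} \<and> P (x \<inter> A) \<and> Q (x \<inter> ?C)}"
    proof (rule subsetI)
      fix z assume "z \<in> ?h ` (?U \<times> ?V)"
      then obtain u v where h: "u \<subseteq> A" "P u" "v \<subseteq> ?C" "Q v" and z: "z = u \<union> v" by auto
      have "(u \<union> v) \<inter> A = u" "(u \<union> v) \<inter> ?C = v" using h by auto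
      then show "z \<in> {x. x \<subseteq> {..<n} \<and> P (x \<inter> A) \<and> Q (x \<inter> ?C)}"
        using h assms z by auto
    qed
  next
    show "{x. x \<subseteq> {..<n} \<and> P (x \<inter> A) \<and> Q (x \<inter> ?C)} \<subseteq> ?h ` (?U \<times> ?V)"
    proof clarify
      fix x assume h: "x \<subseteq> {..<n}" "P (x \<inter> A)" "Q (x \<inter> ?C)"
      have "x = ?h (x \<inter> A, x \<inter> ?C)" using h by auto
      moreover have "(x \<inter> A, x \<inter> ?C) \<in> ?U \<times> ?V" using h by auto
      ultimately show "x \<in> ?h ` (?U \<times> ?V)" by blast
    qed
  qed
  have "card (?h ` (?U \<times> ?V)) = card (?U \<times> ?V)" by (rule card_image[OF inj])
  then show ?thesis using img by (simp add: card_cartesian_product)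
qed

lemma card_real_interval:
  assumes "finite J" "\<forall>j\<in>J. lo \<le> real j \<and> real j \<le> hi" "lo \<le> hi"
  shows "real (card J) \<le> hi - lo + 1"
proof (cases "J = {}")
  case True then show ?thesis using assms by simp
next
  case False
  have "J \<subseteq> {Min J..Max J}" using assms False by auto
  then have "card J \<le> card {Min J..Max J}" by (rule card_mono[rotated]) simp
  also have "\<dots> = Max J + 1 - Min J" by simp
  finally have c: "real (card J) \<le> real (Max J) + 1 - real (Min J)"
    using Max_ge[OF assms(1) Min_in[OF assms(1) False]] by linarith
  have "real (Max J) \<le> hi" "lo \<le> real (Min J)" using assms False by auto
  with c show ?thesis by linarith
qed

definition g_mono :: "nat \<Rightarrow> real \<Rightarrow> nat set \<Rightarrow> (nat \<Rightarrow> nat set) \<Rightarrow> (nat \<Rightarrow> bool) \<Rightarrow> nat set \<Rightarrow> bool" where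
  "g_mono n eps A T b x =
    (let C = {..<n} - A; m = card C; L = tal_L m eps;
         S = S_T L T (x \<inter> C); w = real (card (x \<inter> C)) in
     if card S > 1 \<or> w > real m / 2 + 0.05 * eps * sqrt (real m) then True
     else if card S = 0 \<or> w < real m / 2 then False
     else b (THE l. S = {l}))"


lemma g_mono_monotone: "monotone_on_cube n (g_mono n eps A T b)"
  unfolding monotone_on_cube_def
proof (intro allI impI, elim conjE)
  fix x y assume xy: "x \<subseteq> y" and yn: "y \<subseteq> {..<n}" and gx: "g_mono n eps A T b x"
  define C where "C = {..<n} - A"
  define m where "m = card C"
  define L where "L = tal_L m eps"
  define Sx where "Sx = S_T L T (x \<inter> C)"
  define Sy where "Sy = S_T L T (y \<inter> C)"
  define th where "th = real m / 2 + 0.05 * eps * sqrt (real m)"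
  have fin: "finite Sy" "finite Sx" unfolding Sx_def Sy_def S_T_def by auto
  have sub: "Sx \<subseteq> Sy" unfolding Sx_def Sy_def S_T_def using xy by auto
  have cs: "card Sx \<le> card Sy" by (rule card_mono[OF fin(1) sub])
  have w: "card (x \<inter> C) \<le> card (y \<inter> C)" by (rule card_mono) (use xy C_def in auto)
  have gx': "card Sx > 1 \<or> real (card (x \<inter> C)) > th \<or>
     (card Sx = 1 \<and> real (card (x \<inter> C)) \<ge> real m / 2 \<and> b (THE l. Sx = {l}))"
    using gx unfolding g_mono_def Let_def C_def[symmetric] m_def[symmetric] L_def[symmetric]
      Sx_def[symmetric] th_def[symmetric] by (auto split: if_splits)
  have goal: "card Sy > 1 \<or> real (card (y \<inter> C)) > th \<or>
     (card Sy = 1 \<and> real (card (y \<inter> C)) \<ge> real m / 2 \<and> b (THE l. Sy = {l}))"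
  proof -
    { assume "card Sx > 1" then have ?thesis using cs by simp }
    moreover
    { assume "real (card (x \<inter> C)) > th" then have ?thesis using w by simp }
    moreover
    { assume h: "card Sx = 1" "real (card (x \<inter> C)) \<ge> real m / 2" "b (THE l. Sx = {l})"
      have ?thesis
      proof (cases "card Sy > 1 \<or> real (card (y \<inter> C)) > th")
        case True then show ?thesis by blast
      next
        case False
        then have "card Sy \<le> 1" by simp
        moreover have "card Sy \<ge> 1" using cs h by simp
        ultimately have "card Sy = 1" by simp
        then have "Sy = Sx" using h(1) sub fin
          by (metis card_seteq order_refl)
        then show ?thesis using h w \<open>card Sy = 1\<close> by simp
      qed }
    ultimately show ?thesis using gx' by blast
  qed
  then show "g_mono n eps A T b y"
    unfolding g_mono_def Let_def C_def[symmetric] m_def[symmetric] L_def[symmetric]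
      Sy_def[symmetric] th_def[symmetric] by auto
qed

lemma diff_band:
  assumes "f_yes n eps c1 A T b x \<noteq> g_mono n eps A T b x"
  shows "real (card A) / 2 - c1 * sqrt (real (card A)) \<le> real (card (x \<inter> A)) \<and>
         real (card (x \<inter> A)) \<le> real (card A) / 2 + c1 * sqrt (real (card A)) \<and>
         real (card ({..<n} - A)) / 2 \<le> real (card (x \<inter> ({..<n} - A))) \<and>
         real (card (x \<inter> ({..<n} - A))) \<le> real (card ({..<n} - A)) / 2 + 0.05 * eps * sqrt (real (card ({..<n} - A)))"
  using assms unfolding f_yes_def g_mono_def Let_def h_plus_def
  by (auto split: if_splits)

lemma final_ineq:
  fixes c1 eps s t X Y P Q :: real
  assumes "c1 > 0" "eps > 0" "s > 0" "t > 0" "1/s \<le> c1/100" "1/t \<le> eps/100"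
    "0 \<le> X" "0 \<le> Y" "P > 0" "Q > 0"
    "X \<le> (2*c1*s+1)*((41/50)*P/s)" "Y \<le> (0.05*eps*t+1)*((41/50)*Q/t)"
  shows "X*Y/(P*Q) \<le> 0.1*c1*eps"
proof -
  have e1: "(2*c1*s+1)*((41/50)*P/s) = (41/50)*(2*c1 + 1/s)*P" using assms(3) by (simp add: field_simps)
  have e2: "(0.05*eps*t+1)*((41/50)*Q/t) = (41/50)*(0.05*eps + 1/t)*Q" using assms(4) by (simp add: field_simps)
  have x: "X/P \<le> (41/50)*(201/100)*c1"
  proof -
    have "X/P \<le> (41/50)*(2*c1 + 1/s)" using assms(11) assms(9) unfolding e1 by (simp add: field_simps)
    also have "\<dots> \<le> (41/50)*(201/100)*c1" using assms(5) by simp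
    finally show ?thesis .
  qed
  have y: "Y/Q \<le> (41/50)*(6/100)*eps"
  proof -
    have "Y/Q \<le> (41/50)*(0.05*eps + 1/t)" using assms(12) assms(10) unfolding e2 by (simp add: field_simps)
    also have "\<dots> \<le> (41/50)*(6/100)*eps" using assms(6) by simp
    finally show ?thesis .
  qed
  have "X*Y/(P*Q) = (X/P)*(Y/Q)" by simp
  also have "\<dots> \<le> ((41/50)*(201/100)*c1) * ((41/50)*(6/100)*eps)"
    by (rule mult_mono[OF x y]) (use assms in auto)
  also have "\<dots> \<le> 0.1*c1*eps" using assms(1,2) by (simp add: algebra_simps)
  finally show ?thesis .
qed

lemma main_bound:
  fixes c1 c0 eps :: real and n :: nat
  assumes c1: "0 < c1" and c0: "200 \<le> c0" and nN: "real n \<ge> 10^8 / c1^4" and n1: "n \<ge> 1"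
    and e1: "c0 / sqrt (real n) \<le> eps" and e2: "eps < 1"
    and f: "f \<in> yes_support n eps c1"
  shows "\<exists>g. monotone_on_cube n g \<and> dist_cube n f g \<le> 0.1 * c1 * eps"
proof -
  obtain A T b where A: "A \<subseteq> {..<n}" and cardA: "real (card A) = sqrt (real n) / eps"
    and fdef: "f = f_yes n eps c1 A T b"
    using f unfolding yes_support_def by blast
  define a where "a = card A"
  define C where "C = {..<n} - A"
  define m where "m = card C"
  define rn where "rn = sqrt (real n)"
  have rn0: "rn > 0" using n1 unfolding rn_def by simp
  have rn2: "rn * rn = real n" unfolding rn_def by simp
  have eps0: "eps > 0"
  proof -
    have "c0 / rn > 0" using c0 rn0 by simp
    then show ?thesis using e1 unfolding rn_def by linarith
  qed
  have aeq: "real a = rn / eps" using cardA unfolding a_def rn_def .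
  have aleN: "a \<le> n" unfolding a_def using A card_mono[of "{..<n}" A] by simp
  have meq: "m = n - a" unfolding m_def C_def a_def using A by (simp add: card_Diff_subset finite_subset)
  have nam: "n = a + m" using meq aleN by simp
  have a_ge: "real a \<ge> rn"
  proof -
    have "rn * eps \<le> rn" using rn0 e2 eps0 by simp
    then show ?thesis unfolding aeq using eps0 by (simp add: field_simps)
  qed
  have q1: "(10^4 / c1^2)^2 \<le> real n"
  proof -
    have "(10^4 / c1^2)^2 = (10^8 / c1^4 :: real)" by (simp add: power_divide power_mult[symmetric])
    then show ?thesis using nN by simp
  qed
  have q2: "10^4 / c1^2 \<le> rn" unfolding rn_def by (rule real_le_rsqrt[OF q1])
  have q3: "(100/c1)^2 \<le> real a"
  proof -
    have "(100/c1)^2 = 10^4 / c1^2" by (simp add: power_divide)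
    then show ?thesis using q2 a_ge by simp
  qed
  have sA: "100/c1 \<le> sqrt (real a)" by (rule real_le_rsqrt[OF q3])
  have s0: "sqrt (real a) > 0" using sA c1 by (smt (verit) divide_pos_pos)
  have s1: "1 / sqrt (real a) \<le> c1/100"
  proof -
    have "1 / sqrt (real a) \<le> 1 / (100/c1)" by (rule divide_left_mono[OF sA]) (use c1 s0 in auto)
    then show ?thesis by simp
  qed
  have ie: "1/eps \<le> rn/200"
  proof -
    have "c0 \<le> eps * rn" using e1 rn0 unfolding rn_def[symmetric] by (simp add: field_simps)
    then have "200 \<le> eps * rn" using c0 by linarith
    then show ?thesis using eps0 by (simp add: field_simps)
  qed
  have a_le: "real a \<le> real n / 200"
  proof -
    have "real a = rn * (1/eps)" unfolding aeq by simp
    also have "\<dots> \<le> rn * (rn/200)" by (rule mult_left_mono[OF ie]) (use rn0 in simp)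
    also have "\<dots> = real n / 200" using rn2 by simp
    finally show ?thesis .
  qed
  have ie2: "(100/eps)^2 \<le> real n / 4"
  proof -
    have ie0: "0 \<le> 1/eps" using eps0 by simp
    have "(1/eps)^2 \<le> (rn/200)^2" by (rule power_mono[OF ie ie0])
    also have "\<dots> = real n / 40000" using rn2 by (simp add: power2_eq_square)
    finally have "(1/eps)^2 \<le> real n / 40000" .
    moreover have "(100/eps)^2 = 10000 * (1/eps)^2" by (simp add: power_divide)
    ultimately show ?thesis by simp
  qed
  have q4: "(100/eps)^2 \<le> real m" using meq aleN a_le ie2 by (simp add: of_nat_diff)
  have tC: "100/eps \<le> sqrt (real m)" by (rule real_le_rsqrt[OF q4])
  have t0: "sqrt (real m) > 0" using tC eps0 by (smt (verit) divide_pos_pos)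
  have t1: "1 / sqrt (real m) \<le> eps/100"
  proof -
    have "1 / sqrt (real m) \<le> 1 / (100/eps)" by (rule divide_left_mono[OF tC]) (use eps0 t0 in auto)
    then show ?thesis by simp
  qed
  have a0: "a > 0" using s0 by simp
  have m0: "m > 0" using t0 by simp
  define g where "g = g_mono n eps A T b"
  define PA where "PA = (\<lambda>u::nat set. real a / 2 - c1 * sqrt (real a) \<le> real (card u) \<and>
         real (card u) \<le> real a / 2 + c1 * sqrt (real a))"
  define QC where "QC = (\<lambda>v::nat set. real m / 2 \<le> real (card v) \<and>
         real (card v) \<le> real m / 2 + 0.05 * eps * sqrt (real m))"
  let ?D = "{x \<in> cube n. f x \<noteq> g x}"
  let ?B = "{x. x \<subseteq> {..<n} \<and> PA (x \<inter> A) \<and> QC (x \<inter> C)}"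
  have DB: "?D \<subseteq> ?B"
  proof
    fix x assume "x \<in> ?D"
    then have x: "x \<subseteq> {..<n}" "f_yes n eps c1 A T b x \<noteq> g_mono n eps A T b x"
      unfolding cube_def fdef g_def by auto
    show "x \<in> ?B" using diff_band[OF x(2)] x(1) unfolding PA_def QC_def a_def m_def C_def by simp
  qed
  have finB: "finite ?B" by (rule finite_subset[of _ "Pow {..<n}"]) auto
  have cD: "card ?D \<le> card ?B" by (rule card_mono[OF finB DB])
  define JA where "JA = {j. j \<le> a \<and> real a / 2 - c1 * sqrt (real a) \<le> real j \<and>
         real j \<le> real a / 2 + c1 * sqrt (real a)}"
  define JC where "JC = {k. k \<le> m \<and> real m / 2 \<le> real k \<and>
         real k \<le> real m / 2 + 0.05 * eps * sqrt (real m)}"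
  define SA where "SA = (\<Sum>j\<in>JA. a choose j)"
  define SC where "SC = (\<Sum>k\<in>JC. m choose k)"
  have cB: "card ?B = SA * SC"
  proof -
    have "card ?B = card {u. u \<subseteq> A \<and> PA u} * card {v. v \<subseteq> C \<and> QC v}"
      unfolding C_def by (rule card_split[OF A])
    moreover have "card {u. u \<subseteq> A \<and> PA u} = SA"
      unfolding SA_def JA_def PA_def a_def
      by (rule card_subsets_pred) (use A finite_subset in blast)
    moreover have "card {v. v \<subseteq> C \<and> QC v} = SC"
      unfolding SC_def JC_def QC_def m_def
      by (rule card_subsets_pred) (simp add: C_def)
    ultimately show ?thesis by simp
  qed
  have bA: "real SA \<le> (2*c1*sqrt (real a)+1)*((41/50)*2^a/sqrt (real a))"
  proof -
    have finJ: "finite JA" unfolding JA_def by simp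
    have "real SA = (\<Sum>j\<in>JA. real (a choose j))" unfolding SA_def by simp
    also have "\<dots> \<le> real (card JA) * ((41/50) * 2^a / sqrt (real a))"
      using sum_bounded_above[of JA "\<lambda>j. real (a choose j)" "(41/50) * 2^a / sqrt (real a)"]
        cb_real[OF a0] by simp
    also have "\<dots> \<le> (2*c1*sqrt (real a)+1) * ((41/50) * 2^a / sqrt (real a))"
    proof (rule mult_right_mono)
      have "real (card JA) \<le> (real a / 2 + c1 * sqrt (real a)) - (real a / 2 - c1 * sqrt (real a)) + 1"
        by (rule card_real_interval[OF finJ]) (use c1 s0 in \<open>auto simp: JA_def\<close>)
      then show "real (card JA) \<le> 2*c1*sqrt (real a)+1" by simp
    qed simp
    finally show ?thesis .
  qed
  have bC: "real SC \<le> (0.05*eps*sqrt (real m)+1)*((41/50)*2^m/sqrt (real m))"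
  proof -
    have finJ: "finite JC" unfolding JC_def by simp
    have "real SC = (\<Sum>k\<in>JC. real (m choose k))" unfolding SC_def by simp
    also have "\<dots> \<le> real (card JC) * ((41/50) * 2^m / sqrt (real m))"
      using sum_bounded_above[of JC "\<lambda>j. real (m choose j)" "(41/50) * 2^m / sqrt (real m)"]
        cb_real[OF m0] by simp
    also have "\<dots> \<le> (0.05*eps*sqrt (real m)+1) * ((41/50) * 2^m / sqrt (real m))"
    proof (rule mult_right_mono)
      have "real (card JC) \<le> (real m / 2 + 0.05 * eps * sqrt (real m)) - (real m / 2) + 1"
        by (rule card_real_interval[OF finJ]) (use eps0 t0 in \<open>auto simp: JC_def\<close>)
      then show "real (card JC) \<le> 0.05*eps*sqrt (real m)+1" by simp
    qed simp
    finally show ?thesis .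
  qed
  have "dist_cube n f g = real (card ?D) / 2^n" unfolding dist_cube_def by simp
  also have "\<dots> \<le> real (SA * SC) / 2^n"
  proof -
    have "card ?D \<le> SA * SC" using cD cB by simp
    then have "real (card ?D) \<le> real (SA * SC)" by (rule of_nat_mono)
    then show ?thesis by (rule divide_right_mono) simp
  qed
  also have "\<dots> = real SA * real SC / (2^a * 2^m)"
  proof -
    have p: "(2::real)^n = 2^a * 2^m" unfolding nam by (rule power_add)
    show ?thesis unfolding p of_nat_mult ..
  qed
  also have "\<dots> \<le> 0.1 * c1 * eps"
    by (rule final_ineq[OF c1 eps0 s0 t0 s1 t1 _ _ _ _ bA bC]) auto
  finally have "dist_cube n f g \<le> 0.1 * c1 * eps" .
  moreover have "monotone_on_cube n g" unfolding g_def by (rule g_mono_monotone)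
  ultimately show ?thesis by blast
qed

theorem mainTheorem5:
  shows "\<exists>c1bar > 0. c1bar \<le> 0.01 \<and>
    (\<forall>c1. 0 < c1 \<and> c1 < c1bar \<longrightarrow>
      (\<exists>C0. \<forall>c0 \<ge> C0. \<exists>N :: nat. \<forall>n \<ge> N. \<forall>eps :: real.
         c0 / sqrt (real n) \<le> eps \<and> eps < 1 \<and>
         (\<exists>a :: nat. real a = sqrt (real n) / eps) \<longrightarrow>
         (\<forall>f \<in> yes_support n eps c1.
            \<exists>g. monotone_on_cube n g \<and> dist_cube n f g \<le> 0.1 * c1 * eps)))"
proof (rule exI[of _ "0.01::real"], intro conjI allI impI)
  fix c1 :: real assume "0 < c1 \<and> c1 < 0.01"
  then have c1: "0 < c1" by simp
  show "\<exists>C0. \<forall>c0 \<ge> C0. \<exists>N :: nat. \<forall>n \<ge> N. \<forall>eps :: real.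
         c0 / sqrt (real n) \<le> eps \<and> eps < 1 \<and>
         (\<exists>a :: nat. real a = sqrt (real n) / eps) \<longrightarrow>
         (\<forall>f \<in> yes_support n eps c1.
            \<exists>g. monotone_on_cube n g \<and> dist_cube n f g \<le> 0.1 * c1 * eps)"
  proof (rule exI[of _ "200::real"], intro allI impI)
    fix c0 :: real assume c0: "200 \<le> c0"
    show "\<exists>N :: nat. \<forall>n \<ge> N. \<forall>eps :: real.
         c0 / sqrt (real n) \<le> eps \<and> eps < 1 \<and>
         (\<exists>a :: nat. real a = sqrt (real n) / eps) \<longrightarrow>
         (\<forall>f \<in> yes_support n eps c1.
            \<exists>g. monotone_on_cube n g \<and> dist_cube n f g \<le> 0.1 * c1 * eps)"
    proof (rule exI[of _ "nat \<lceil>10^8 / c1^4\<rceil> + 1"], intro allI impI ballI)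
      fix n :: nat and eps :: real and f
      assume n: "nat \<lceil>10^8 / c1^4\<rceil> + 1 \<le> n"
        and h: "c0 / sqrt (real n) \<le> eps \<and> eps < 1 \<and> (\<exists>a :: nat. real a = sqrt (real n) / eps)"
        and f: "f \<in> yes_support n eps c1"
      have nN: "real n \<ge> 10^8 / c1^4"
      proof -
        have "10^8 / c1^4 \<le> real (nat \<lceil>10^8 / c1^4\<rceil>)" by linarith
        then show ?thesis using n by linarith
      qed
      have n1: "n \<ge> 1" using n by simp
      show "\<exists>g. monotone_on_cube n g \<and> dist_cube n f g \<le> 0.1 * c1 * eps"
        by (rule main_bound[OF c1 c0 nN n1 _ _ f]) (use h in auto)
    qed
  qed
qed simp_all

end
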